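(* Let $\omega=e^{2\pi i/3}$ and consider the six three-qubit states $$\tfrac{1}{\sqrt3}(|001\rangle+|010\rangle+|100\rangle),\ \tfrac{1}{\sqrt3}(|001\rangle+\omega|010\rangle+\omega^2|100\rangle),\ \tfrac{1}{\sqrt3}(|001\rangle+\omega^2|010\rangle+\omega|100\rangle),$$ $$\tfrac{1}{\sqrt3}(|000\rangle+|101\rangle+|110\rangle),\ \tfrac{1}{\sqrt3}(|000\rangle+\omega|101\rangle+\omega^2|110\rangle),\ \tfrac{1}{\sqrt3}(|000\rangle+\omega^2|101\rangle+\omega|110\rangle).$$ These states are mutually orthogonal, each is genuinely entangled and belongs to the W-class, and they form an unextendible entangled basis of $\mathbb{C}^2\otimes\mathbb{C}^2\otimes\mathbb{C}^2$. Moreover, the unextendibility is conserved across every bipartition: for each bipartition $A|BC$, $B|AC$, $C|AB$, the orthogonal complement of their span contains no pure state that is entangled with respect to that bipartition.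
   Context: $|v_1v_2v_3\rangle$ denotes $|v_1\rangle\otimes|v_2\rangle\otimes|v_3\rangle$ in the computational basis. A pure three-qubit state is genuinely entangled if it is not a product state across any bipartition. The W-class is the set of three-qubit pure states that can be obtained from $|W\rangle=\tfrac{1}{\sqrt3}(|001\rangle+|010\rangle+|100\rangle)$ by stochastic LOCC (SLOCC), i.e. by invertible local operators $A\otimes B\otimes C$ up to normalization. An unextendible entangled basis is a set of mutually orthogonal pure entangled states spanning a proper subspace whose orthogonal complement contains no entangled state. *)

theory Defs
  imports Complex_Main
begin

text \<open>Three-qubit pure states (unnormalised vectors of C^2 (x) C^2 (x) C^2) are
  represented as amplitude functions; the computational basis label 0 is False,
  1 is True, and psi x y z is the amplitude of the basis state |xyz>.\<close>

type_synonym qstate = "bool \<Rightarrow> bool \<Rightarrow> bool \<Rightarrow> complex"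
type_synonym qop = "bool \<Rightarrow> bool \<Rightarrow> complex"  \<comment> \<open>2x2 matrix, M row col\<close>

definition ket :: "bool \<Rightarrow> bool \<Rightarrow> bool \<Rightarrow> qstate" where
  "ket a b c = (\<lambda>x y z. if x = a \<and> y = b \<and> z = c then 1 else 0)"

definition qinner :: "qstate \<Rightarrow> qstate \<Rightarrow> complex" where
  "qinner u v = (\<Sum>x\<in>UNIV. \<Sum>y\<in>UNIV. \<Sum>z\<in>UNIV. cnj (u x y z) * v x y z)"

definition fully_product :: "qstate \<Rightarrow> bool" where
  "fully_product \<psi> \<longleftrightarrow> (\<exists>a b c :: bool \<Rightarrow> complex. \<psi> = (\<lambda>x y z. a x * b y * c z))"

definition entangled :: "qstate \<Rightarrow> bool" where
  "entangled \<psi> \<longleftrightarrow> \<psi> \<noteq> (\<lambda>x y z. 0) \<and> \<not> fully_product \<psi>"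

datatype bipartition = A_BC | B_AC | C_AB

definition bi_product :: "bipartition \<Rightarrow> qstate \<Rightarrow> bool" where
  "bi_product P \<psi> = (case P of
      A_BC \<Rightarrow> (\<exists>(a :: bool \<Rightarrow> complex) \<phi>. \<psi> = (\<lambda>x y z. a x * \<phi> y z))
    | B_AC \<Rightarrow> (\<exists>(b :: bool \<Rightarrow> complex) \<phi>. \<psi> = (\<lambda>x y z. b y * \<phi> x z))
    | C_AB \<Rightarrow> (\<exists>(c :: bool \<Rightarrow> complex) \<phi>. \<psi> = (\<lambda>x y z. c z * \<phi> x y)))"

definition bi_entangled :: "bipartition \<Rightarrow> qstate \<Rightarrow> bool" where
  "bi_entangled P \<psi> \<longleftrightarrow> \<psi> \<noteq> (\<lambda>x y z. 0) \<and> \<not> bi_product P \<psi>"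

definition genuinely_entangled :: "qstate \<Rightarrow> bool" where
  "genuinely_entangled \<psi> \<longleftrightarrow> (\<forall>P. bi_entangled P \<psi>)"

definition opmul :: "qop \<Rightarrow> qop \<Rightarrow> qop" where
  "opmul M N = (\<lambda>i j. \<Sum>k\<in>UNIV. M i k * N k j)"

definition op_invertible :: "qop \<Rightarrow> bool" where
  "op_invertible M \<longleftrightarrow> (\<exists>N. opmul M N = (\<lambda>i j. if i = j then 1 else 0)
                           \<and> opmul N M = (\<lambda>i j. if i = j then 1 else 0))"

definition apply_local :: "qop \<Rightarrow> qop \<Rightarrow> qop \<Rightarrow> qstate \<Rightarrow> qstate" where
  "apply_local A B C \<psi> = (\<lambda>x y z. \<Sum>x'\<in>UNIV. \<Sum>y'\<in>UNIV. \<Sum>z'\<in>UNIV.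
       A x x' * B y y' * C z z' * \<psi> x' y' z')"

definition W_state :: qstate where
  "W_state = (\<lambda>x y z. (ket False False True x y z + ket False True False x y z
                        + ket True False False x y z) / complex_of_real (sqrt 3))"

definition in_W_class :: "qstate \<Rightarrow> bool" where
  "in_W_class \<psi> \<longleftrightarrow> (\<exists>A B C (s::complex). op_invertible A \<and> op_invertible B \<and> op_invertible C
       \<and> s \<noteq> 0 \<and> \<psi> = (\<lambda>x y z. s * apply_local A B C W_state x y z))"

definition in_orth_compl :: "qstate set \<Rightarrow> qstate \<Rightarrow> bool" where
  "in_orth_compl S \<psi> \<longleftrightarrow> (\<forall>u\<in>S. qinner u \<psi> = 0)"

definition unextendible_entangled_basis :: "qstate set \<Rightarrow> bool" where
  "unextendible_entangled_basis S \<longleftrightarrow>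
     (\<forall>u\<in>S. \<forall>v\<in>S. u \<noteq> v \<longrightarrow> qinner u v = 0)
   \<and> (\<forall>u\<in>S. entangled u)
   \<and> (\<exists>\<psi>. \<psi> \<noteq> (\<lambda>x y z. 0) \<and> in_orth_compl S \<psi>)
   \<and> (\<forall>\<psi>. in_orth_compl S \<psi> \<longrightarrow> \<not> entangled \<psi>)"

definition omega :: complex where
  "omega = cis (2 * pi / 3)"

definition ueb_state :: "nat \<Rightarrow> qstate" where
  "ueb_state k = (if k < 3 then
      (\<lambda>x y z. (ket False False True x y z + omega ^ k * ket False True False x y z
                 + omega ^ (2 * k) * ket True False False x y z) / complex_of_real (sqrt 3))
    else
      (\<lambda>x y z. (ket False False False x y z + omega ^ (k - 3) * ket True False True x y z
                 + omega ^ (2 * (k - 3)) * ket True True False x y z) / complex_of_real (sqrt 3)))"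

end

theory Submission
  imports Defs
begin

lemma om3: "omega ^ 3 = 1"
proof -
  have "omega ^ 3 = cis (real 3 * (2 * pi / 3))" unfolding omega_def by (rule DeMoivre)
  also have "real 3 * (2 * pi / 3) = 2 * pi" by simp
  finally show ?thesis by simp
qed

lemma om_ne1: "omega \<noteq> 1"
proof
  assume "omega = 1"
  hence "Re omega = 1" by simp
  moreover have "Re omega = -1/2" unfolding omega_def by (simp add: cos_120)
  ultimately show False by simp
qed

lemma om_sum: "1 + omega + omega ^ 2 = 0"
proof -
  have "(omega - 1) * (1 + omega + omega ^ 2) = omega ^ 3 - 1"
    by (simp add: algebra_simps power2_eq_square power3_eq_cube)
  also have "\<dots> = 0" by (simp add: om3)
  finally show ?thesis using om_ne1 by simp
qed

lemma om_cnj: "cnj omega = omega ^ 2"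
proof -
  have n: "cmod omega = 1" unfolding omega_def by simp
  have "cnj omega * omega = 1"
    using n by (metis complex_norm_square mult.commute of_real_1 power_one)
  moreover have "omega ^ 2 * omega = 1" using om3 by (simp add: power2_eq_square power3_eq_cube)
  moreover have "omega \<noteq> 0" using n by auto
  ultimately show ?thesis by (metis mult_right_cancel)
qed

lemma om_pow_red [simp]: "numeral n \<ge> (3::nat) \<Longrightarrow> omega ^ numeral n = omega ^ (numeral n - 3)"
proof -
  assume "numeral n \<ge> (3::nat)"
  hence "omega ^ numeral n = omega ^ 3 * omega ^ (numeral n - 3)"
    by (metis le_add_diff_inverse power_add)
  thus ?thesis by (simp add: om3)
qed

lemma ket_simp: "ket a b c x y z = (if x = a \<and> y = b \<and> z = c then 1 else 0)"
  by (simp add: ket_def)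

lemma sum_bool: "(\<Sum>x\<in>(UNIV::bool set). f x) = f True + f False"
  by (simp add: UNIV_bool add.commute)

lemma om_sq2: "omega ^ 2 = -1 - omega"
  proof -
  have "omega ^ 2 = (1 + omega + omega ^ 2) - 1 - omega" by simp
  thus ?thesis using om_sum by simp
qed

lemma om_sq: "omega * omega = -1 - omega"
  using om_sq2 by (simp only: power2_eq_square)

lemma s3: "complex_of_real (sqrt 3) * complex_of_real (sqrt 3) = 3"
proof -
  have "complex_of_real (sqrt 3 * sqrt 3) = 3" by simp
  thus ?thesis by (simp only: of_real_mult)
qed

lemma all6: "(\<forall>i<(6::nat). P i) = (P 0 \<and> P 1 \<and> P 2 \<and> P 3 \<and> P 4 \<and> P 5)"
proof
  assume "\<forall>i<6. P i" thus "P 0 \<and> P 1 \<and> P 2 \<and> P 3 \<and> P 4 \<and> P 5" by simp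
next
  assume H: "P 0 \<and> P 1 \<and> P 2 \<and> P 3 \<and> P 4 \<and> P 5"
  show "\<forall>i<6. P i"
  proof (intro allI impI)
    fix i :: nat assume "i < 6"
    hence "i = 0 \<or> i = 1 \<or> i = 2 \<or> i = 3 \<or> i = 4 \<or> i = 5" by presburger
    thus "P i" using H by auto
  qed
qed

lemma orth: "\<forall>i<6. \<forall>j<6. i \<noteq> j \<longrightarrow> qinner (ueb_state i) (ueb_state j) = 0"
  unfolding all6
  apply (simp add: qinner_def ueb_state_def ket_simp sum_bool om_cnj)
  apply (simp add: s3 add_divide_distrib[symmetric] om_sq om_sq2)
  done

lemma om_ne0: "omega \<noteq> 0"
proof
  assume "omega = 0" hence "omega ^ 3 = 0" by simp
  with om3 show False by simp
qed

lemma s3_ne0: "complex_of_real (sqrt 3) \<noteq> 0"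
  by simp

lemma biA: "bi_product A_BC \<psi> \<Longrightarrow> \<psi> a b c * \<psi> a' b' c' = \<psi> a' b c * \<psi> a b' c'"
  by (auto simp: bi_product_def)
lemma biB: "bi_product B_AC \<psi> \<Longrightarrow> \<psi> a b c * \<psi> a' b' c' = \<psi> a b' c * \<psi> a' b c'"
  by (auto simp: bi_product_def)
lemma biC: "bi_product C_AB \<psi> \<Longrightarrow> \<psi> a b c * \<psi> a' b' c' = \<psi> a b c' * \<psi> a' b' c"
  by (auto simp: bi_product_def)

lemma uebA: "k < 3 \<Longrightarrow> ueb_state k x y z = (if \<not>x \<and> \<not>y \<and> z then 1 else if \<not>x \<and> y \<and> \<not>z then omega ^ k
   else if x \<and> \<not>y \<and> \<not>z then omega ^ (2*k) else 0) / complex_of_real (sqrt 3)"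
  by (auto simp: ueb_state_def ket_simp)

lemma uebB: "\<not> k < 3 \<Longrightarrow> ueb_state k x y z = (if \<not>x \<and> \<not>y \<and> \<not>z then 1 else if x \<and> \<not>y \<and> z then omega ^ (k-3)
   else if x \<and> y \<and> \<not>z then omega ^ (2*(k-3)) else 0) / complex_of_real (sqrt 3)"
  by (auto simp: ueb_state_def ket_simp)

lemma gen_ent: "genuinely_entangled (ueb_state k)"
  unfolding genuinely_entangled_def bi_entangled_def
proof
  fix P
  show "ueb_state k \<noteq> (\<lambda>x y z. 0) \<and> \<not> bi_product P (ueb_state k)"
  proof (cases "k < 3")
    case True
    have nz: "ueb_state k False False True \<noteq> 0" using True by (simp add: uebA)
    show ?thesis
    proof (intro conjI)
      show "ueb_state k \<noteq> (\<lambda>x y z. 0)" using nz by auto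
      show "\<not> bi_product P (ueb_state k)"
      proof (cases P)
        case A_BC
        show ?thesis
        proof
          assume "bi_product P (ueb_state k)"
          hence "bi_product A_BC (ueb_state k)" using A_BC by simp
          from biA[OF this, of False False True True False False]
          show False using True by (simp add: uebA om_ne0)
        qed
      next
        case B_AC
        show ?thesis
        proof
          assume "bi_product P (ueb_state k)"
          hence "bi_product B_AC (ueb_state k)" using B_AC by simp
          from biB[OF this, of False False True False True False]
          show False using True by (simp add: uebA om_ne0)
        qed
      next
        case C_AB
        show ?thesis
        proof
          assume "bi_product P (ueb_state k)"
          hence "bi_product C_AB (ueb_state k)" using C_AB by simp
          from biC[OF this, of False False True False True False]
          show False using True by (simp add: uebA om_ne0)
        qed
      qed
    qed
  next
    case False
    have nz: "ueb_state k False False False \<noteq> 0" using False by (simp add: uebB)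
    show ?thesis
    proof (intro conjI)
      show "ueb_state k \<noteq> (\<lambda>x y z. 0)" using nz by auto
      show "\<not> bi_product P (ueb_state k)"
      proof (cases P)
        case A_BC
        show ?thesis
        proof
          assume "bi_product P (ueb_state k)"
          hence "bi_product A_BC (ueb_state k)" using A_BC by simp
          from biA[OF this, of False False False True False True]
          show False using False by (simp add: uebB om_ne0)
        qed
      next
        case B_AC
        show ?thesis
        proof
          assume "bi_product P (ueb_state k)"
          hence "bi_product B_AC (ueb_state k)" using B_AC by simp
          from biB[OF this, of False False False True True False]
          show False using False by (simp add: uebB om_ne0)
        qed
      next
        case C_AB
        show ?thesis
        proof
          assume "bi_product P (ueb_state k)"
          hence "bi_product C_AB (ueb_state k)" using C_AB by simp
          from biC[OF this, of False False False True False True]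
          show False using False by (simp add: uebB om_ne0)
        qed
      qed
    qed
  qed
qed

lemma solve3:
  assumes "a + b + c = 0" "a + omega^2 * b + omega * c = 0" "a + omega * b + omega^2 * c = 0"
  shows "a = 0 \<and> b = 0 \<and> c = 0"
  using assms om3 om_sum by algebra

definition dg :: "complex \<Rightarrow> qop" where
  "dg c = (\<lambda>i j. if i = j then (if i then c else 1) else 0)"

definition flipX :: qop where
  "flipX = (\<lambda>i j. if i = j then 0 else 1)"

lemma dg_inv: "c \<noteq> 0 \<Longrightarrow> op_invertible (dg c)"
  unfolding op_invertible_def
  by (rule exI[of _ "dg (1/c)"]) (auto simp: opmul_def dg_def sum_bool fun_eq_iff)

lemma X_inv: "op_invertible flipX"
  unfolding op_invertible_def
  by (rule exI[of _ flipX]) (auto simp: opmul_def flipX_def sum_bool fun_eq_iff)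

lemma WA: "k < 3 \<Longrightarrow> ueb_state k = apply_local (dg (omega^(2*k))) (dg (omega^k)) (dg 1) W_state"
  by (auto simp: fun_eq_iff uebA apply_local_def sum_bool W_state_def ket_simp dg_def add_divide_distrib)

lemma WB: "\<not> k < 3 \<Longrightarrow> ueb_state k = apply_local flipX (dg (omega^(2*(k-3)))) (dg (omega^(k-3))) W_state"
  by (auto simp: fun_eq_iff uebB apply_local_def sum_bool W_state_def ket_simp dg_def flipX_def add_divide_distrib)

lemma Wcl: "in_W_class (ueb_state k)"
  unfolding in_W_class_def
proof (cases "k < 3")
  case True
  show "\<exists>A B C s. op_invertible A \<and> op_invertible B \<and> op_invertible C \<and> s \<noteq> 0 \<and>
    ueb_state k = (\<lambda>x y z. s * apply_local A B C W_state x y z)"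
    by (rule exI[of _ "dg (omega^(2*k))"], rule exI[of _ "dg (omega^k)"], rule exI[of _ "dg 1"], rule exI[of _ 1])
      (simp add: dg_inv om_ne0 WA[OF True])
next
  case False
  show "\<exists>A B C s. op_invertible A \<and> op_invertible B \<and> op_invertible C \<and> s \<noteq> 0 \<and>
    ueb_state k = (\<lambda>x y z. s * apply_local A B C W_state x y z)"
    by (rule exI[of _ flipX], rule exI[of _ "dg (omega^(2*(k-3)))"], rule exI[of _ "dg (omega^(k-3))"], rule exI[of _ 1])
      (simp add: dg_inv X_inv om_ne0 WB[OF False])
qed

lemma compl_eqs:
  assumes "in_orth_compl (ueb_state ` {..<6}) \<psi>"
  shows "\<psi> = (\<lambda>x y z. \<psi> x True True * (if y then 1 else 0) * (if z then 1 else 0))"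
proof -
  have q: "qinner (ueb_state k) \<psi> = 0" if "k < 6" for k
    using assms that unfolding in_orth_compl_def by auto
  have e0: "\<psi> False False True + \<psi> False True False + \<psi> True False False = 0"
    using q[of 0] by (simp add: qinner_def uebA sum_bool om_cnj field_simps)
  have e1: "\<psi> False False True + omega^2 * \<psi> False True False + omega * \<psi> True False False = 0"
    using q[of 1] by (simp add: qinner_def uebA sum_bool om_cnj field_simps)
  have e2: "\<psi> False False True + omega * \<psi> False True False + omega^2 * \<psi> True False False = 0"
    using q[of 2] by (simp add: qinner_def uebA sum_bool om_cnj field_simps)
  have f0: "\<psi> False False False + \<psi> True False True + \<psi> True True False = 0"
    using q[of 3] by (simp add: qinner_def uebB sum_bool om_cnj field_simps)
  have f1: "\<psi> False False False + omega^2 * \<psi> True False True + omega * \<psi> True True False = 0"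
    using q[of 4] by (simp add: qinner_def uebB sum_bool om_cnj field_simps)
  have f2: "\<psi> False False False + omega * \<psi> True False True + omega^2 * \<psi> True True False = 0"
    using q[of 5] by (simp add: qinner_def uebB sum_bool om_cnj field_simps)
  note A = solve3[OF e0 e1 e2] and B = solve3[OF f0 f1 f2]
  show ?thesis
  proof (intro ext)
    fix x y z
    show "\<psi> x y z = \<psi> x True True * (if y then 1 else 0) * (if z then 1 else 0)"
      using A B by (cases x; cases y; cases z) auto
  qed
qed

lemma compl_prod:
  assumes "in_orth_compl (ueb_state ` {..<6}) \<psi>"
  shows "\<not> entangled \<psi>" "\<not> bi_entangled P \<psi>"
proof -
  define a where "a = (\<lambda>x. \<psi> x True True)"
  define e where "e = (\<lambda>y::bool. if y then (1::complex) else 0)"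
  have eq: "\<psi> = (\<lambda>x y z. a x * e y * e z)"
    using compl_eqs[OF assms] unfolding a_def e_def by simp
  have "fully_product \<psi>" unfolding fully_product_def using eq by blast
  thus "\<not> entangled \<psi>" unfolding entangled_def by simp
  have "bi_product P \<psi>"
  proof (cases P)
    case A_BC thus ?thesis unfolding bi_product_def using eq
      by (auto intro!: exI[of _ a] exI[of _ "\<lambda>y z. e y * e z"] simp: mult.assoc)
  next
    case B_AC thus ?thesis unfolding bi_product_def using eq
      by (auto intro!: exI[of _ e] exI[of _ "\<lambda>x z. a x * e z"] simp: ac_simps)
  next
    case C_AB thus ?thesis unfolding bi_product_def using eq
      by (auto intro!: exI[of _ e] exI[of _ "\<lambda>x y. a x * e y"] simp: ac_simps)
  qed
  thus "\<not> bi_entangled P \<psi>" unfolding bi_entangled_def by simp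
qed

theorem theorem1:
  shows "(\<forall>i<6. \<forall>j<6. i \<noteq> j \<longrightarrow> qinner (ueb_state i) (ueb_state j) = 0)
    \<and> (\<forall>i<6. genuinely_entangled (ueb_state i) \<and> in_W_class (ueb_state i))
    \<and> unextendible_entangled_basis (ueb_state ` {..<6})
    \<and> (\<forall>P \<psi>. in_orth_compl (ueb_state ` {..<6}) \<psi> \<longrightarrow> \<not> bi_entangled P \<psi>)"
proof (intro conjI)
  show "\<forall>i<6. \<forall>j<6. i \<noteq> j \<longrightarrow> qinner (ueb_state i) (ueb_state j) = 0" by (rule orth)
  show "\<forall>i<6. genuinely_entangled (ueb_state i) \<and> in_W_class (ueb_state i)"
    using gen_ent Wcl by blast
  show "\<forall>P \<psi>. in_orth_compl (ueb_state ` {..<6}) \<psi> \<longrightarrow> \<not> bi_entangled P \<psi>"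
    using compl_prod by blast
  show "unextendible_entangled_basis (ueb_state ` {..<6})"
    unfolding unextendible_entangled_basis_def
  proof (intro conjI)
    show "\<forall>u\<in>ueb_state ` {..<6}. \<forall>v\<in>ueb_state ` {..<6}. u \<noteq> v \<longrightarrow> qinner u v = 0"
      using orth by auto
    show "\<forall>u\<in>ueb_state ` {..<6}. entangled u"
    proof
      fix u assume "u \<in> ueb_state ` {..<6}"
      then obtain k where u: "u = ueb_state k" by auto
      have g: "bi_entangled A_BC u" using gen_ent[of k] u unfolding genuinely_entangled_def by simp
      have "\<not> fully_product u"
      proof
        assume "fully_product u"
        then obtain a b c :: "bool \<Rightarrow> complex" where "u = (\<lambda>x y z. a x * b y * c z)"
          unfolding fully_product_def by blast
        hence "bi_product A_BC u" unfolding bi_product_def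
          by (auto intro!: exI[of _ a] exI[of _ "\<lambda>y z. b y * c z"] simp: mult.assoc)
        with g show False unfolding bi_entangled_def by simp
      qed
      thus "entangled u" using g unfolding entangled_def bi_entangled_def by simp
    qed
    show "\<exists>\<psi>. \<psi> \<noteq> (\<lambda>x y z. 0) \<and> in_orth_compl (ueb_state ` {..<6}) \<psi>"
    proof (intro exI conjI)
      show "ket True True True \<noteq> (\<lambda>x y z. 0)" by (auto simp: ket_def fun_eq_iff)
      show "in_orth_compl (ueb_state ` {..<6}) (ket True True True)"
        unfolding in_orth_compl_def
        by (auto simp: qinner_def ueb_state_def ket_simp sum_bool)
    qed
    show "\<forall>\<psi>. in_orth_compl (ueb_state ` {..<6}) \<psi> \<longrightarrow> \<not> entangled \<psi>"
      using compl_prod by blast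
  qed
qed

end
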